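(* Let $\sigma$ be a confined position on $K_{a,b}$ with sides $L$ ($|L|=a$) and $R$ ($|R|=b$), let $t\ge 1$, and suppose $\alpha_t(L)=ka$ for some positive integer $k$. Then $u_{t+1}(\sigma,w)-u_1(\sigma,w)=k$ for every $w\in R$.
   Context: Parallel chip-firing game: a position $\sigma$ assigns a nonnegative integer to each vertex; writing $\Phi_\sigma(v)$ for the number of neighbors $w$ of $v$ with $\sigma(w)\ge\deg(w)$, the step operator is $U\sigma(v)=\sigma(v)+\Phi_\sigma(v)$ if $\sigma(v)\le \deg(v)-1$ and $U\sigma(v)=\sigma(v)+\Phi_\sigma(v)-\deg(v)$ otherwise. A position is confined if every vertex satisfies $\Phi_\sigma(v)\le\sigma(v)\le\Phi_\sigma(v)+\deg(v)-1$. In $K_{a,b}$ each vertex of $L$ is adjacent exactly to all vertices of $R$ (so $L$-vertices have degree $b$, $R$-vertices degree $a$). $u_t(\sigma,v)=|\{s: 0\le s<t,\ U^s\sigma(v)\ge\deg(v)\}|$, and $\alpha_t(L)=\sum_{v\in L}u_t(\sigma,v)$. *)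

theory Defs
  imports Main
begin

(* A graph is given by a vertex set V and a (symmetric) adjacency relation E.
   A position assigns a nonnegative integer (nat) to each vertex. *)

definition deg :: "'v set \<Rightarrow> ('v \<Rightarrow> 'v \<Rightarrow> bool) \<Rightarrow> 'v \<Rightarrow> nat" where
  "deg V E v = card {w \<in> V. E v w}"

definition Phi :: "'v set \<Rightarrow> ('v \<Rightarrow> 'v \<Rightarrow> bool) \<Rightarrow> ('v \<Rightarrow> nat) \<Rightarrow> 'v \<Rightarrow> nat" where
  "Phi V E \<sigma> v = card {w \<in> V. E v w \<and> \<sigma> w \<ge> deg V E w}"

definition step :: "'v set \<Rightarrow> ('v \<Rightarrow> 'v \<Rightarrow> bool) \<Rightarrow> ('v \<Rightarrow> nat) \<Rightarrow> ('v \<Rightarrow> nat)" where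
  "step V E \<sigma> = (\<lambda>v. if \<sigma> v + 1 \<le> deg V E v then \<sigma> v + Phi V E \<sigma> v
                      else \<sigma> v + Phi V E \<sigma> v - deg V E v)"

(* confined: Phi(v) <= sigma(v) <= Phi(v) + deg(v) - 1, the upper bound written
   without truncated subtraction as sigma(v) + 1 <= Phi(v) + deg(v) *)
definition confined :: "'v set \<Rightarrow> ('v \<Rightarrow> 'v \<Rightarrow> bool) \<Rightarrow> ('v \<Rightarrow> nat) \<Rightarrow> bool" where
  "confined V E \<sigma> \<longleftrightarrow> (\<forall>v\<in>V. Phi V E \<sigma> v \<le> \<sigma> v \<and> \<sigma> v + 1 \<le> Phi V E \<sigma> v + deg V E v)"

definition fire_count :: "'v set \<Rightarrow> ('v \<Rightarrow> 'v \<Rightarrow> bool) \<Rightarrow> nat \<Rightarrow> ('v \<Rightarrow> nat) \<Rightarrow> 'v \<Rightarrow> nat" where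
  "fire_count V E t \<sigma> v = card {s. s < t \<and> ((step V E ^^ s) \<sigma>) v \<ge> deg V E v}"

definition alpha :: "'v set \<Rightarrow> ('v \<Rightarrow> 'v \<Rightarrow> bool) \<Rightarrow> nat \<Rightarrow> ('v \<Rightarrow> nat) \<Rightarrow> 'v set \<Rightarrow> nat" where
  "alpha V E t \<sigma> S = (\<Sum>v\<in>S. fire_count V E t \<sigma> v)"

definition kab_adj :: "'v set \<Rightarrow> 'v set \<Rightarrow> 'v \<Rightarrow> 'v \<Rightarrow> bool" where
  "kab_adj L R v w \<longleftrightarrow> (v \<in> L \<and> w \<in> R) \<or> (v \<in> R \<and> w \<in> L)"

end

theory Submission
  imports Defs
begin

lemma card_less_Suc_P:
  "card {s. s < Suc t \<and> P s} = card {s. s < t \<and> P s} + (if P t then 1 else 0)"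
proof -
  have e: "{s. s < Suc t \<and> P s} = {s. s < t \<and> P s} \<union> (if P t then {t} else {})"
    by (auto simp: less_Suc_eq)
  show ?thesis unfolding e by (auto simp: card_insert_if)
qed

lemma swap_count:
  fixes t :: nat
  assumes "finite L"
  shows "(\<Sum>v\<in>L. card {s. s < t \<and> P s v}) = (\<Sum>s<t. card {v\<in>L. P s v})"
proof (induction t)
  case 0 then show ?case by simp
next
  case (Suc t)
  have "(\<Sum>v\<in>L. card {s. s < Suc t \<and> P s v})
      = (\<Sum>v\<in>L. card {s. s < t \<and> P s v}) + (\<Sum>v\<in>L. (if P t v then 1 else 0))"
    by (simp add: card_less_Suc_P sum.distrib)
  also have "(\<Sum>v\<in>L. (if P t v then 1 else 0)) = card {v\<in>L. P t v}"
    using assms by (simp add: sum.If_cases Int_def)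
  finally show ?case using Suc by simp
qed

lemma deg_R:
  assumes "L \<inter> R = {}" "w \<in> R"
  shows "deg (L \<union> R) (kab_adj L R) w = card L"
proof -
  have "{x \<in> L \<union> R. kab_adj L R w x} = L" using assms by (auto simp: kab_adj_def)
  then show ?thesis by (simp add: deg_def)
qed

lemma Phi_R:
  assumes "L \<inter> R = {}" "w \<in> R"
  shows "Phi (L \<union> R) (kab_adj L R) \<sigma> w
       = card {v\<in>L. \<sigma> v \<ge> deg (L \<union> R) (kab_adj L R) v}"
proof -
  have "{x \<in> L \<union> R. kab_adj L R w x \<and> \<sigma> x \<ge> deg (L \<union> R) (kab_adj L R) x}
       = {v\<in>L. \<sigma> v \<ge> deg (L \<union> R) (kab_adj L R) v}" using assms by (auto simp: kab_adj_def)
  then show ?thesis by (simp add: Phi_def)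
qed

theorem lemma3p3:
  fixes L R :: "'v set" and \<sigma> :: "'v \<Rightarrow> nat" and t k :: nat
  assumes "finite L" and "finite R" and "L \<inter> R = {}"
    and "L \<noteq> {}" and "R \<noteq> {}"
    and "confined (L \<union> R) (kab_adj L R) \<sigma>"
    and "t \<ge> 1" and "k > 0"
    and "alpha (L \<union> R) (kab_adj L R) t \<sigma> L = k * card L"
  shows "\<forall>w\<in>R. int (fire_count (L \<union> R) (kab_adj L R) (t + 1) \<sigma> w)
                 - int (fire_count (L \<union> R) (kab_adj L R) 1 \<sigma> w) = int k"
proof
  fix w assume wR: "w \<in> R"
  define V where "V = L \<union> R"
  define E where "E = kab_adj L R"
  define a where "a = card L"
  define X where "X = (\<lambda>s. (step V E ^^ s) \<sigma>)"
  define A where "A = (\<lambda>s. card {v\<in>L. X s v \<ge> deg V E v})"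
  have apos: "a > 0" using assms(1,4) by (simp add: a_def card_gt_0_iff)
  have degw: "deg V E w = a" using deg_R[OF assms(3) wR] by (simp add: V_def E_def a_def)
  have Aa: "A s \<le> a" for s unfolding A_def a_def
    using assms(1) by (intro card_mono) auto
  have PhiA: "Phi V E (X s) w = A s" for s
    using Phi_R[OF assms(3) wR] by (simp add: V_def E_def A_def)
  have X0: "X 0 w < 2 * a"
  proof -
    have "Phi V E \<sigma> w = A 0" using PhiA[of 0] by (simp add: X_def)
    moreover have "\<sigma> w + 1 \<le> Phi V E \<sigma> w + deg V E w"
      using assms(6) wR by (simp add: confined_def V_def E_def)
    ultimately show ?thesis using Aa[of 0] degw by (simp add: X_def)
  qed
  have XS: "X (Suc s) w = A s + X s w mod a \<and> X s w < 2 * a" for s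
  proof (induction s)
    case 0
    have "X 1 w = A 0 + X 0 w mod a"
    proof (cases "X 0 w + 1 \<le> a")
      case True then show ?thesis using PhiA[of 0] degw
        by (simp add: X_def step_def)
    next
      case False
      then have "X 0 w mod a = X 0 w - a" using X0 
        by (simp add: le_mod_geq mod_if)
      then show ?thesis using False PhiA[of 0] degw
        by (simp add: X_def step_def)
    qed
    then show ?case using X0 by simp
  next
    case (Suc s)
    have b: "X (Suc s) w < 2 * a" using Suc Aa[of s] apos
      by (metis add_le_less_mono mod_less_divisor mult_2)
    have "X (Suc (Suc s)) w = A (Suc s) + X (Suc s) w mod a"
    proof (cases "X (Suc s) w + 1 \<le> a")
      case True then show ?thesis using PhiA[of "Suc s"] degw
        by (simp add: X_def step_def)
    next
      case False
      then have "X (Suc s) w mod a = X (Suc s) w - a" using b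
        by (simp add: le_mod_geq mod_if)
      then show ?thesis using False PhiA[of "Suc s"] degw
        by (simp add: X_def step_def)
    qed
    then show ?case using b by simp
  qed
  have fc: "fire_count V E n \<sigma> w = card {s. s < n \<and> X s w \<ge> a}" for n
    by (simp add: fire_count_def X_def degw)
  have key: "a * card {s. s < n \<and> X s w \<ge> a} + X n w = X 0 w + (\<Sum>s<n. A s)" for n
  proof (induction n)
    case 0 then show ?case by simp
  next
    case (Suc n)
    have "X (Suc n) w + a * (if X n w \<ge> a then 1 else 0) = X n w + A n"
      using XS[of n] by (auto simp: le_mod_geq mod_if)
    then show ?case using Suc by (simp add: card_less_Suc_P algebra_simps)
  qed
  have sumA: "(\<Sum>s<t. A s) = k * a"
  proof -
    have "(\<Sum>s<t. A s) = alpha V E t \<sigma> L"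
      unfolding alpha_def fire_count_def A_def X_def
      using swap_count[OF assms(1), of t "\<lambda>s v. deg V E v \<le> (step V E ^^ s) \<sigma> v"] by simp
    then show ?thesis using assms(9) by (simp add: V_def E_def a_def)
  qed
  have modt: "X t w mod a = X 0 w mod a"
  proof -
    have "a * card {s. s < t \<and> X s w \<ge> a} + X t w = X 0 w + k * a" using key[of t] sumA by simp
    then have "(a * card {s. s < t \<and> X s w \<ge> a} + X t w) mod a = (X 0 w + k * a) mod a" by simp
    then show ?thesis by simp
  qed
  define u1 where "u1 = card {s. s < 1 \<and> X s w \<ge> a}"
  define ut where "ut = card {s. s < t + 1 \<and> X s w \<ge> a}"
  have e1: "a * u1 + X 1 w = X 0 w + A 0" using key[of 1] by (simp add: u1_def)
  have e2: "a * ut + X (t+1) w = X 0 w + k * a + A t" using key[of "t+1"] sumA by (simp add: ut_def)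
  have x1: "X 1 w = A 0 + X 0 w mod a" using XS[of 0] by simp
  have x2: "X (t+1) w = A t + X 0 w mod a" using XS[of t] modt by simp
  have "a * ut = a * u1 + k * a"
    using e1 e2 x1 x2 by linarith
  then have "a * ut = a * (u1 + k)" by (simp add: algebra_simps)
  then have "ut = u1 + k" using apos by simp
  then have "int ut - int u1 = int k" by simp
  then show "int (fire_count (L \<union> R) (kab_adj L R) (t + 1) \<sigma> w)
                 - int (fire_count (L \<union> R) (kab_adj L R) 1 \<sigma> w) = int k"
    using fc[of 1] fc[of "t+1"] by (simp add: V_def E_def u1_def ut_def)
qed

end
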